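(* Let $n,m\in\mathbb{N}$, $f,g:\mathbb{F}_2^n\to\mathbb{F}_2$, $\mathbf{y}\in\mathbb{F}_2^n$, and let $h(\mathbf{x})=\mathbf{x}\cdot\mathbf{y}$. Then: (i) when $A^{(m)3,3}_n(h,f,g)$ is executed, the probability of measuring the all-zero state $\ket{0^n}$ is $2^{-2n}|C^{(m)}_{f,g}(\mathbf{y})|^2$; (ii) when $A^{(m)2,3}_n(h,f,g)$ is executed, the probability of measuring the driving qubit in state $\ket{0}$ is $\frac12\left(1+\Re\left(2^{-n}\zeta_m^{-wt(\mathbf{y})}C^{(m)}_{f,g}(\mathbf{y})\right)\right)$.
   Context: $\zeta_m=e^{2\pi i/m}$, $\overline{\zeta_m}$ its conjugate; $wt$ is Hamming weight; $\mathbf{x}\cdot\mathbf{y}=\bigoplus_i x_iy_i$; $\mathbf{x}\odot\mathbf{y}=\sum_ix_iy_i$ in the integers. $m$-crosscorrelation: $C^{(m)}_{f,g}(\mathbf{y})=\sum_{\mathbf{x}}(-1)^{f(\mathbf{x})\oplus g(\mathbf{x}\oplus\mathbf{y})}(\zeta_m^2)^{\mathbf{x}\odot\mathbf{y}}$. Gates: $\mathrm{H}$ Hadamard; $\Omega_m=\frac{1}{\sqrt2}\begin{pmatrix}1&\zeta_m\\1&-\zeta_m\end{pmatrix}$; $\overline{\Omega}_m=\frac{1}{\sqrt2}\begin{pmatrix}1&\overline{\zeta_m}\\1&-\overline{\zeta_m}\end{pmatrix}$; $\mathrm{S}_m=\mathrm{diag}(1,\zeta_m)$; $U_f$ is the phase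 oracle $\ket{\mathbf{x}}\mapsto(-1)^{f(\mathbf{x})}\ket{\mathbf{x}}$. Algorithm $A^{(m)3,3}_n(f_1,f_2,f_3)$: from $\ket{0^n}$ apply in order $\mathrm{H}^{\otimes n}$, $U_{f_2}$, $\Omega_m^{\otimes n}$, $U_{f_1}$, $\mathrm{H}^{\otimes n}$, $U_{f_3}$, $\overline{\Omega}_m^{\otimes n}$, then measure all qubits. Algorithm $A^{(m)2,3}_n(f_1,f_2,f_3)$: driving qubit in $\ket{+}$, $n$-qubit register in $\ket{0^n}$; apply $\mathrm{H}^{\otimes n}$ to the register; controlled on driving qubit $\ket{0}$ apply $U_{f_2}$, $\Omega_m^{\otimes n}$, $U_{f_1}$, $\mathrm{H}^{\otimes n}$ in order; controlled on driving qubit $\ket{1}$ apply $\mathrm{S}_m^{\otimes n}$, $U_{f_3}$ in order; apply $\mathrm{H}$ to the driving qubit and measure it. *)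

theory Defs
  imports Complex_Main
begin

text \<open>Bit strings of length n model F_2^n; quantum states on n qubits are
  amplitude functions on bit strings (only values on length-n lists matter).\<close>

definition bitstr :: "nat \<Rightarrow> bool list set" where
  "bitstr n = {xs. length xs = n}"

definition xorv :: "bool list \<Rightarrow> bool list \<Rightarrow> bool list" where
  "xorv x y = map2 (\<noteq>) x y"

definition idot :: "bool list \<Rightarrow> bool list \<Rightarrow> nat" where
  "idot x y = length (filter id (map2 (\<and>) x y))"

definition bdot :: "bool list \<Rightarrow> bool list \<Rightarrow> bool" where
  "bdot x y = odd (idot x y)"

definition wt :: "bool list \<Rightarrow> nat" where
  "wt x = length (filter id x)"

definition zeta :: "nat \<Rightarrow> complex" where
  "zeta m = exp (2 * pi * \<i> / of_nat m)"

definition sgnb :: "bool \<Rightarrow> complex" where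
  "sgnb b = (if b then -1 else 1)"

definition crosscorr :: "nat \<Rightarrow> nat \<Rightarrow> (bool list \<Rightarrow> bool) \<Rightarrow> (bool list \<Rightarrow> bool) \<Rightarrow> bool list \<Rightarrow> complex" where
  "crosscorr n m f g y =
     (\<Sum>x\<in>bitstr n. sgnb (f x \<noteq> g (xorv x y)) * (zeta m ^ 2) ^ idot x y)"

type_synonym state = "bool list \<Rightarrow> complex"
text \<open>single-qubit gate: gate out in = matrix entry (row out, column in)\<close>
type_synonym gate = "bool \<Rightarrow> bool \<Rightarrow> complex"

definition hadamard :: gate where
  "hadamard a b = (if a \<and> b then -1 else 1) / of_real (sqrt 2)"

definition omega :: "nat \<Rightarrow> gate" where
  "omega m a b = (if b then (if a then - zeta m else zeta m) else 1) / of_real (sqrt 2)"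

definition omega_bar :: "nat \<Rightarrow> gate" where
  "omega_bar m a b = (if b then (if a then - cnj (zeta m) else cnj (zeta m)) else 1) / of_real (sqrt 2)"

definition sgate :: "nat \<Rightarrow> gate" where
  "sgate m a b = (if a = b then (if a then zeta m else 1) else 0)"

definition tensor_apply :: "nat \<Rightarrow> gate \<Rightarrow> state \<Rightarrow> state" where
  "tensor_apply n U \<psi> = (\<lambda>x. \<Sum>z\<in>bitstr n. (\<Prod>i<n. U (x ! i) (z ! i)) * \<psi> z)"

definition phase_oracle :: "(bool list \<Rightarrow> bool) \<Rightarrow> state \<Rightarrow> state" where
  "phase_oracle f \<psi> = (\<lambda>x. sgnb (f x) * \<psi> x)"

definition ket0 :: "nat \<Rightarrow> state" where
  "ket0 n = (\<lambda>x. if x = replicate n False then 1 else 0)"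

definition A33_state :: "nat \<Rightarrow> nat \<Rightarrow> (bool list \<Rightarrow> bool) \<Rightarrow> (bool list \<Rightarrow> bool) \<Rightarrow> (bool list \<Rightarrow> bool) \<Rightarrow> state" where
  "A33_state m n f1 f2 f3 =
     tensor_apply n (omega_bar m)
      (phase_oracle f3
       (tensor_apply n hadamard
        (phase_oracle f1
         (tensor_apply n (omega m)
          (phase_oracle f2
           (tensor_apply n hadamard (ket0 n)))))))"

definition meas_prob :: "nat \<Rightarrow> state \<Rightarrow> bool list \<Rightarrow> real" where
  "meas_prob n \<psi> x = (cmod (\<psi> x))\<^sup>2"

text \<open>Joint states of driving qubit and n-qubit register.\<close>
type_synonym jstate = "bool \<Rightarrow> bool list \<Rightarrow> complex"

definition controlled :: "bool \<Rightarrow> (state \<Rightarrow> state) \<Rightarrow> jstate \<Rightarrow> jstate" where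
  "controlled b U \<Psi> = (\<lambda>c. if c = b then U (\<Psi> c) else \<Psi> c)"

definition reg_apply :: "(state \<Rightarrow> state) \<Rightarrow> jstate \<Rightarrow> jstate" where
  "reg_apply U \<Psi> = (\<lambda>c. U (\<Psi> c))"

definition drive_apply :: "gate \<Rightarrow> jstate \<Rightarrow> jstate" where
  "drive_apply U \<Psi> = (\<lambda>c x. \<Sum>d\<in>UNIV. U c d * \<Psi> d x)"

definition ket_plus_ket0 :: "nat \<Rightarrow> jstate" where
  "ket_plus_ket0 n = (\<lambda>c x. ket0 n x / of_real (sqrt 2))"

definition A23_state :: "nat \<Rightarrow> nat \<Rightarrow> (bool list \<Rightarrow> bool) \<Rightarrow> (bool list \<Rightarrow> bool) \<Rightarrow> (bool list \<Rightarrow> bool) \<Rightarrow> jstate" where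
  "A23_state m n f1 f2 f3 =
     drive_apply hadamard
      (controlled True (\<lambda>\<psi>. phase_oracle f3 (tensor_apply n (sgate m) \<psi>))
       (controlled False (\<lambda>\<psi>. tensor_apply n hadamard (phase_oracle f1
                                  (tensor_apply n (omega m) (phase_oracle f2 \<psi>))))
        (reg_apply (tensor_apply n hadamard) (ket_plus_ket0 n))))"

definition drive_prob :: "nat \<Rightarrow> jstate \<Rightarrow> bool \<Rightarrow> real" where
  "drive_prob n \<Psi> b = (\<Sum>x\<in>bitstr n. (cmod (\<Psi> b x))\<^sup>2)"

end

theory Submission
  imports Defs
begin

lemma bitstr_Suc: "bitstr (Suc n) = (\<lambda>(b,z). b#z) ` (UNIV \<times> bitstr n)"
  by (auto simp: bitstr_def length_Suc_conv)

lemma finite_bitstr: "finite (bitstr n)"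
  by (induction n) (auto simp: bitstr_Suc, simp add: bitstr_def)

lemma sum_prod_factor:
  "(\<Sum>z\<in>bitstr n. \<Prod>i<n. F i (z!i)) = (\<Prod>i<n. F i False + F i True :: complex)"
proof (induction n arbitrary: F)
  case 0
  then show ?case by (simp add: bitstr_def)
next
  case (Suc n)
  have inj: "inj_on (\<lambda>(b,z). b#z) (UNIV \<times> bitstr n)"
    by (auto simp: inj_on_def)
  have "(\<Sum>z\<in>bitstr (Suc n). \<Prod>i<Suc n. F i (z!i))
      = (\<Sum>(b,z)\<in>UNIV \<times> bitstr n. \<Prod>i<Suc n. F i ((b#z)!i))"
    unfolding bitstr_Suc by (subst sum.reindex[OF inj]) (simp add: case_prod_beta)
  also have "\<dots> = (\<Sum>b\<in>UNIV. \<Sum>z\<in>bitstr n. F 0 b * (\<Prod>i<n. F (Suc i) (z!i)))"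
    by (subst sum.cartesian_product[symmetric]) (simp add: prod.lessThan_Suc_shift del: prod.lessThan_Suc)
  also have "\<dots> = (\<Sum>b\<in>UNIV. F 0 b * (\<Prod>i<n. F (Suc i) False + F (Suc i) True))"
    using Suc.IH[of "\<lambda>i. F (Suc i)"] by (simp add: sum_distrib_left[symmetric])
  also have "\<dots> = (\<Prod>i<Suc n. F i False + F i True)"
    by (simp add: prod.lessThan_Suc_shift UNIV_bool algebra_simps del: prod.lessThan_Suc)
  finally show ?case .
qed

lemma card_bitstr: "card (bitstr n) = 2 ^ n"
proof -
  have "of_nat (card (bitstr n)) = (\<Sum>z\<in>bitstr n. \<Prod>i<n. (\<lambda>i b. 1::complex) i (z!i))"
    by simp
  also have "\<dots> = 2 ^ n" by (subst sum_prod_factor) simp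
  finally show ?thesis by (metis of_nat_eq_of_nat_power_cancel_iff of_nat_numeral)
qed

lemma prod_if_count: "(\<Prod>i<(n::nat). if P i then c else 1) = c ^ card {i. i < n \<and> P i}"
proof (induction n)
  case 0 then show ?case by simp
next
  case (Suc n)
  show ?case
  proof (cases "P n")
    case True
    have "{i. i < Suc n \<and> P i} = insert n {i. i < n \<and> P i}"
      using True by (auto simp: less_Suc_eq)
    then show ?thesis using True Suc.IH by (simp add: mult.commute)
  next
    case False
    have "{i. i < Suc n \<and> P i} = {i. i < n \<and> P i}"
      using False by (auto simp: less_Suc_eq)
    then show ?thesis using False Suc.IH by simp
  qed
qed

lemma idot_card: "length x = n \<Longrightarrow> length y = n \<Longrightarrow> idot x y = card {i. i < n \<and> x!i \<and> y!i}"
  by (auto simp: idot_def length_filter_conv_card intro!: arg_cong[where f=card])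

lemma wt_card: "length x = n \<Longrightarrow> wt x = card {i. i < n \<and> x!i}"
  by (simp add: wt_def length_filter_conv_card)

lemma sgnb_bdot: "length x = n \<Longrightarrow> length y = n \<Longrightarrow>
   sgnb (bdot x y) = (\<Prod>i<n. if x!i \<and> y!i then -1 else 1)"
  by (simp add: prod_if_count bdot_def sgnb_def idot_card)

lemma pow_idot: "length x = n \<Longrightarrow> length y = n \<Longrightarrow>
   c ^ idot x y = (\<Prod>i<n. if x!i \<and> y!i then c else 1)"
  by (simp add: prod_if_count idot_card)

lemma pow_wt: "length x = n \<Longrightarrow> c ^ wt x = (\<Prod>i<n. if x!i then c else 1)"
  by (simp add: prod_if_count wt_card)

lemma xorv_nth: "length w = length y \<Longrightarrow> i < length w \<Longrightarrow> xorv w y ! i = (w!i \<noteq> y!i)"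
  by (simp add: xorv_def)

lemma length_xorv: "length (xorv w y) = min (length w) (length y)"
  by (simp add: xorv_def)

lemma prod_if_eq: "length z = n \<Longrightarrow> length v = n \<Longrightarrow>
  (\<Prod>i<n. if z!i = v!i then a i else (0::complex)) = (if z = v then \<Prod>i<n. a i else 0)"
proof (cases "z = v")
  case True then show ?thesis by simp
next
  case False
  assume "length z = n" "length v = n"
  then obtain j where "j < n" "z!j \<noteq> v!j" using False nth_equalityI by metis
  then show ?thesis using False by (subst prod_zero) auto
qed

lemma sq2: "complex_of_real (sqrt 2) * complex_of_real (sqrt 2) = 2"
  by (subst of_real_mult[symmetric]) simp

lemma norm_zeta: "cmod (zeta m) = 1"
  by (simp add: zeta_def norm_exp_eq_Re)

lemma cnj_zeta: "cnj (zeta m) * zeta m = 1"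
  by (metis complex_norm_square mult.commute norm_zeta of_real_1 power_one)


definition rs :: complex where "rs = 1 / of_real (sqrt 2)"

lemma rs_sq: "rs * rs = 1/2"
  unfolding rs_def using sq2 by (simp add: field_simps)

lemma H_False: "hadamard a False = rs" by (simp add: hadamard_def rs_def)

lemma H0: "tensor_apply n hadamard (ket0 n) = (\<lambda>x. rs ^ n)"
proof
  fix x
  have "tensor_apply n hadamard (ket0 n) x
     = (\<Sum>z\<in>bitstr n. if z = replicate n False then (\<Prod>i<n. hadamard (x ! i) (z ! i)) else 0)"
    unfolding tensor_apply_def ket0_def by (rule sum.cong) auto
  also have "\<dots> = (\<Prod>i<n. hadamard (x ! i) (replicate n False ! i))"
    by (subst sum.delta[OF finite_bitstr]) (simp add: bitstr_def)
  also have "\<dots> = rs ^ n" by (simp add: H_False)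
  finally show "tensor_apply n hadamard (ket0 n) x = rs ^ n" .
qed

lemma coord_branch:
  "hadamard a False * (if False \<and> b then -1 else 1) * omega m False t
   + hadamard a True * (if True \<and> b then -1 else 1) * omega m True t
   = (if t = (a \<noteq> b) then (if (a \<noteq> b) then zeta m else 1) else 0)"
proof -
  have e: "\<And>u v. u / complex_of_real (sqrt 2) * (v / complex_of_real (sqrt 2)) = u * v / 2"
    using sq2 by (simp add: field_simps)
  show ?thesis
    by (cases a; cases b; cases t) (simp_all add: hadamard_def omega_def e sq2)
qed

lemma branch:
  assumes "length w = n" "length y = n"
  shows "tensor_apply n hadamard (phase_oracle (\<lambda>x. bdot x y)
           (tensor_apply n (omega m) (phase_oracle f (\<lambda>_. c)))) w
       = c * sgnb (f (xorv w y)) * (\<Prod>i<n. if w!i \<noteq> y!i then zeta m else 1)"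
proof -
  let ?B = "bitstr n"
  let ?G = "\<lambda>z i b. hadamard (w!i) b * (if b \<and> y!i then -1 else 1) * omega m b (z!i)"
  let ?v = "xorv w y"
  have lv: "length ?v = n" using assms by (simp add: length_xorv)
  have "tensor_apply n hadamard (phase_oracle (\<lambda>x. bdot x y)
           (tensor_apply n (omega m) (phase_oracle f (\<lambda>_. c)))) w
     = (\<Sum>x\<in>?B. \<Sum>z\<in>?B. sgnb (f z) * c * (\<Prod>i<n. ?G z i (x!i)))"
    unfolding tensor_apply_def phase_oracle_def
  proof (rule sum.cong[OF refl])
    fix x assume x: "x \<in> ?B"
    show "(\<Prod>i<n. hadamard (w ! i) (x ! i)) *
        (sgnb (bdot x y) * (\<Sum>z\<in>?B. (\<Prod>i<n. omega m (x ! i) (z ! i)) * (sgnb (f z) * c)))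
      = (\<Sum>z\<in>?B. sgnb (f z) * c * (\<Prod>i<n. ?G z i (x!i)))"
      using x assms
      by (simp add: sum_distrib_left sgnb_bdot bitstr_def prod.distrib mult_ac)
  qed
  also have "\<dots> = (\<Sum>z\<in>?B. sgnb (f z) * c * (\<Sum>x\<in>?B. \<Prod>i<n. ?G z i (x!i)))"
    by (subst sum.swap) (simp add: sum_distrib_left)
  also have "\<dots> = (\<Sum>z\<in>?B. sgnb (f z) * c *
       (\<Prod>i<n. if z!i = ?v!i then (if ?v!i then zeta m else 1) else 0))"
  proof (rule sum.cong[OF refl])
    fix z assume "z \<in> ?B"
    have "(\<Sum>x\<in>?B. \<Prod>i<n. ?G z i (x!i)) = (\<Prod>i<n. ?G z i False + ?G z i True)"
      by (rule sum_prod_factor)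
    also have "\<dots> = (\<Prod>i<n. if z!i = ?v!i then (if ?v!i then zeta m else 1) else 0)"
      by (rule prod.cong[OF refl], subst coord_branch, use assms in \<open>simp add: xorv_nth\<close>)
    finally show "sgnb (f z) * c * (\<Sum>x\<in>?B. \<Prod>i<n. ?G z i (x!i)) =
       sgnb (f z) * c * (\<Prod>i<n. if z!i = ?v!i then (if ?v!i then zeta m else 1) else 0)" by simp
  qed
  also have "\<dots> = (\<Sum>z\<in>?B. if z = ?v then sgnb (f z) * c * (\<Prod>i<n. if ?v!i then zeta m else 1) else 0)"
    by (rule sum.cong[OF refl]) (use lv in \<open>simp add: prod_if_eq bitstr_def\<close>)
  also have "\<dots> = sgnb (f ?v) * c * (\<Prod>i<n. if ?v!i then zeta m else 1)"
    using lv by (subst sum.delta[OF finite_bitstr]) (simp add: bitstr_def)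
  also have "\<dots> = c * sgnb (f (xorv w y)) * (\<Prod>i<n. if w!i \<noteq> y!i then zeta m else 1)"
    using assms by (simp add: xorv_nth)
  finally show ?thesis .
qed

lemma sgate_tensor:
  "tensor_apply n (sgate m) (\<lambda>_. c) w = c * (\<Prod>i<n. if w!i then zeta m else 1)"
proof -
  have "tensor_apply n (sgate m) (\<lambda>_. c) w = c * (\<Sum>z\<in>bitstr n. \<Prod>i<n. sgate m (w!i) (z!i))"
    by (simp add: tensor_apply_def sum_distrib_left mult_ac)
  also have "\<dots> = c * (\<Prod>i<n. if w!i then zeta m else 1)"
    by (subst sum_prod_factor) (auto simp: sgate_def intro!: prod.cong)
  finally show ?thesis .
qed

lemma omega_bar_tensor0:
  "tensor_apply n (omega_bar m) \<psi> (replicate n False)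
   = (\<Sum>w\<in>bitstr n. rs ^ n * (\<Prod>i<n. if w!i then cnj (zeta m) else 1) * \<psi> w)"
  unfolding tensor_apply_def
proof (rule sum.cong[OF refl])
  fix w
  have "(\<Prod>i<n. omega_bar m (replicate n False ! i) (w ! i)) = (\<Prod>i<n. rs * (if w!i then cnj (zeta m) else 1))"
    by (rule prod.cong) (auto simp: omega_bar_def rs_def)
  then show "(\<Prod>i<n. omega_bar m (replicate n False ! i) (w ! i)) * \<psi> w =
         rs ^ n * (\<Prod>i<n. if w ! i then cnj (zeta m) else 1) * \<psi> w"
    by (simp add: prod.distrib)
qed


lemma phase_oracle_apply: "phase_oracle f \<psi> x = sgnb (f x) * \<psi> x"
  by (simp add: phase_oracle_def)

lemma cnj_zeta': "zeta m * cnj (zeta m) = 1"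
  using cnj_zeta by (simp add: mult.commute)

lemma sgnb_neq: "sgnb (a \<noteq> b) = sgnb a * sgnb b"
  by (cases a; cases b) (simp_all add: sgnb_def)

lemma sgnb_neq2: "sgnb (a = (\<not> b)) = sgnb a * sgnb b"
  by (cases a; cases b) (simp_all add: sgnb_def)

lemma xorv_xorv: "length w = length y \<Longrightarrow> xorv (xorv w y) y = w"
  by (rule nth_equalityI) (auto simp: xorv_def)

lemma norm_prod_zeta: "cmod (\<Prod>i<n. if P i then zeta m else 1) = 1"
proof -
  have "cmod (\<Prod>i<n. if P i then zeta m else 1) = (\<Prod>i<n. cmod (if P i then zeta m else 1))"
    by (simp add: prod_norm)
  also have "\<dots> = 1" by (rule prod.neutral) (simp add: norm_zeta)
  finally show ?thesis .
qed

lemma norm_sgnb: "cmod (sgnb b) = 1" by (simp add: sgnb_def)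
lemma cnj_sgnb: "cnj (sgnb b) = sgnb b" by (simp add: sgnb_def)

definition Kt :: "nat \<Rightarrow> nat \<Rightarrow> (bool list \<Rightarrow> bool) \<Rightarrow> (bool list \<Rightarrow> bool) \<Rightarrow> bool list \<Rightarrow> bool list \<Rightarrow> complex" where
  "Kt n m f g y w = sgnb (g w) * sgnb (f (xorv w y)) *
     (\<Prod>i<n. (if w!i then cnj (zeta m) else 1) * (if w!i \<noteq> y!i then zeta m else 1))"

lemma crosscorr_K:
  assumes "length y = n"
  shows "crosscorr n m f g y = zeta m ^ wt y * (\<Sum>w\<in>bitstr n. Kt n m f g y w)"
proof -
  have "crosscorr n m f g y = (\<Sum>w\<in>bitstr n. sgnb (f (xorv w y) \<noteq> g (xorv (xorv w y) y)) * (zeta m ^ 2) ^ idot (xorv w y) y)"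
    unfolding crosscorr_def
    by (rule sum.reindex_bij_witness[of _ "\<lambda>w. xorv w y" "\<lambda>w. xorv w y"])
       (use assms in \<open>auto simp: bitstr_def xorv_xorv length_xorv\<close>)
  also have "\<dots> = (\<Sum>w\<in>bitstr n. zeta m ^ wt y * Kt n m f g y w)"
  proof (rule sum.cong[OF refl])
    fix w assume "w \<in> bitstr n"
    then have lw: "length w = n" by (simp add: bitstr_def)
    have lv: "length (xorv w y) = n" using lw assms by (simp add: length_xorv)
    have "(zeta m ^ 2) ^ idot (xorv w y) y = (\<Prod>i<n. if (w!i \<noteq> y!i) \<and> y!i then zeta m ^ 2 else 1)"
      using lw assms lv by (simp add: pow_idot xorv_nth)
    also have "\<dots> = (\<Prod>i<n. (if y!i then zeta m else 1) *
        ((if w!i then cnj (zeta m) else 1) * (if w!i \<noteq> y!i then zeta m else 1)))"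
      by (rule prod.cong[OF refl]) (auto simp: power2_eq_square cnj_zeta cnj_zeta' mult.assoc)
    also have "\<dots> = zeta m ^ wt y *
        (\<Prod>i<n. (if w!i then cnj (zeta m) else 1) * (if w!i \<noteq> y!i then zeta m else 1))"
      using assms by (simp add: prod.distrib pow_wt)
    finally show "sgnb (f (xorv w y) \<noteq> g (xorv (xorv w y) y)) * (zeta m ^ 2) ^ idot (xorv w y) y
        = zeta m ^ wt y * Kt n m f g y w"
      using lw assms by (simp add: Kt_def sgnb_neq2 xorv_xorv mult_ac)
  qed
  also have "\<dots> = zeta m ^ wt y * (\<Sum>w\<in>bitstr n. Kt n m f g y w)"
    by (simp add: sum_distrib_left)
  finally show ?thesis .
qed

lemma part1:
  assumes "length y = n"
  shows "A33_state m n (\<lambda>x. bdot x y) f g (replicate n False)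
       = (1/2) ^ n * (\<Sum>w\<in>bitstr n. Kt n m f g y w)"
proof -
  have "A33_state m n (\<lambda>x. bdot x y) f g (replicate n False)
     = (\<Sum>w\<in>bitstr n. rs ^ n * (\<Prod>i<n. if w!i then cnj (zeta m) else 1) *
          (sgnb (g w) * (rs ^ n * sgnb (f (xorv w y)) * (\<Prod>i<n. if w!i \<noteq> y!i then zeta m else 1))))"
    unfolding A33_state_def H0 omega_bar_tensor0
    by (rule sum.cong[OF refl]) (use assms in \<open>simp add: branch bitstr_def phase_oracle_apply\<close>)
  also have "\<dots> = (\<Sum>w\<in>bitstr n. (rs * rs) ^ n * Kt n m f g y w)"
    by (rule sum.cong[OF refl]) (simp add: Kt_def prod.distrib power_mult_distrib mult_ac)
  also have "\<dots> = (1/2) ^ n * (\<Sum>w\<in>bitstr n. Kt n m f g y w)"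
    by (simp add: rs_sq sum_distrib_left)
  finally show ?thesis .
qed

lemma tensor_scale: "tensor_apply n U (\<lambda>x. a * \<psi> x) = (\<lambda>x. a * tensor_apply n U \<psi> x)"
  by (simp add: tensor_apply_def sum_distrib_left mult_ac)

lemma part2_amp:
  assumes "length y = n" "length w = n"
  shows "A23_state m n (\<lambda>x. bdot x y) f g False w
     = rs * (rs * rs ^ n) * (sgnb (f (xorv w y)) * (\<Prod>i<n. if w!i \<noteq> y!i then zeta m else 1)
                           + sgnb (g w) * (\<Prod>i<n. if w!i then zeta m else 1))"
proof -
  have kp: "ket_plus_ket0 n c = (\<lambda>x. rs * ket0 n x)" for c
    by (simp add: ket_plus_ket0_def rs_def)
  have r: "reg_apply (tensor_apply n hadamard) (ket_plus_ket0 n) = (\<lambda>c x. rs * rs ^ n)"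
    by (simp add: reg_apply_def kp tensor_scale H0)
  show ?thesis
    unfolding A23_state_def r
    using assms
    by (simp add: drive_apply_def controlled_def UNIV_bool H_False branch sgate_tensor phase_oracle_apply;
        simp add: algebra_simps; simp add: hadamard_def rs_def)
qed

lemma norm_add_unit: "cmod a = 1 \<Longrightarrow> cmod b = 1 \<Longrightarrow> (cmod (a + b))\<^sup>2 = 2 + 2 * Re (a * cnj b)"
proof -
  assume a: "cmod a = 1" and b: "cmod b = 1"
  have a2: "(Re a)\<^sup>2 + (Im a)\<^sup>2 = 1" using a cmod_power2[of a] by simp
  have b2: "(Re b)\<^sup>2 + (Im b)\<^sup>2 = 1" using b cmod_power2[of b] by simp
  have "(cmod (a + b))\<^sup>2 = (Re a)\<^sup>2 + (Im a)\<^sup>2 + ((Re b)\<^sup>2 + (Im b)\<^sup>2) + 2 * (Re a * Re b + Im a * Im b)"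
    by (simp add: cmod_power2 power2_sum)
  then show ?thesis using a2 b2 by simp
qed

lemma norm_rs: "(cmod rs)\<^sup>2 = 1/2"
  by (simp add: rs_def norm_divide power_divide)


lemma cnj_if_zeta: "cnj (if P then zeta m else 1) = (if P then cnj (zeta m) else 1)"
  by simp

theorem theorem8:
  fixes n m :: nat and f g :: "bool list \<Rightarrow> bool" and y :: "bool list"
  assumes "m > 0" and "length y = n"
  defines "h \<equiv> (\<lambda>x. bdot x y)"
  shows "meas_prob n (A33_state m n h f g) (replicate n False)
           = (cmod (crosscorr n m f g y))\<^sup>2 / 2 ^ (2 * n)
         \<and> drive_prob n (A23_state m n h f g) False
           = (1 + Re (zeta m powi (- int (wt y)) * crosscorr n m f g y / 2 ^ n)) / 2"
proof
  define K where "K = (\<Sum>w\<in>bitstr n. Kt n m f g y w)"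
  have C: "crosscorr n m f g y = zeta m ^ wt y * K"
    unfolding K_def by (rule crosscorr_K[OF assms(2)])
  have nC: "cmod (crosscorr n m f g y) = cmod K"
    by (simp add: C norm_mult norm_power norm_zeta)
  show "meas_prob n (A33_state m n h f g) (replicate n False)
           = (cmod (crosscorr n m f g y))\<^sup>2 / 2 ^ (2 * n)"
    unfolding meas_prob_def h_def part1[OF assms(2)] nC K_def[symmetric]
  proof -
    have e1: "cmod ((1/2) ^ n * K) = cmod K / 2 ^ n" by (simp add: norm_mult norm_power norm_divide power_one_over)
    have e2: "(2::real) ^ n * 2 ^ n = 2 ^ (2 * n)" by (simp flip: power_add mult_2)
    show "(cmod ((1/2) ^ n * K))\<^sup>2 = (cmod K)\<^sup>2 / 2 ^ (2 * n)"
      unfolding e1 by (simp add: power2_eq_square e2)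
  qed
  have z0: "zeta m \<noteq> 0" by (simp add: zeta_def)
  have R: "Re (zeta m powi (- int (wt y)) * crosscorr n m f g y / 2 ^ n) = Re K / 2 ^ n"
  proof -
    have "zeta m powi (- int (wt y)) * crosscorr n m f g y = K"
      using z0 by (simp add: C power_int_minus)
    moreover have "(2::complex) ^ n = of_nat (2 ^ n)" by simp
    ultimately show ?thesis by (simp del: of_nat_power)
  qed
  have termw: "(cmod (A23_state m n h f g False w))\<^sup>2 = (1/2) ^ (n + 2) * (2 + 2 * Re (Kt n m f g y w))"
    if w: "w \<in> bitstr n" for w
  proof -
    have lw: "length w = n" using w by (simp add: bitstr_def)
    let ?a = "sgnb (f (xorv w y)) * (\<Prod>i<n. if w!i \<noteq> y!i then zeta m else 1)"
    let ?b = "sgnb (g w) * (\<Prod>i<n. if w!i then zeta m else 1)"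
    have na: "cmod ?a = 1" by (simp add: norm_mult norm_sgnb norm_prod_zeta)
    have nb: "cmod ?b = 1" by (simp add: norm_mult norm_sgnb norm_prod_zeta)
    have ab: "?a * cnj ?b = Kt n m f g y w"
      by (simp add: Kt_def cnj_sgnb cnj_if_zeta prod.distrib[symmetric] mult_ac)
    have "(cmod (A23_state m n h f g False w))\<^sup>2
        = (cmod rs)\<^sup>2 * ((cmod rs)\<^sup>2 * ((cmod rs)\<^sup>2) ^ n) * (cmod (?a + ?b))\<^sup>2"
      unfolding h_def part2_amp[OF assms(2) lw]
      by (simp add: norm_mult norm_power power_mult_distrib mult.commute flip: power_mult)
    also have "\<dots> = (1/2) ^ (n + 2) * (2 + 2 * Re (Kt n m f g y w))"
      unfolding norm_add_unit[OF na nb] ab by (simp add: norm_rs)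
    finally show ?thesis .
  qed
  have "drive_prob n (A23_state m n h f g) False
      = (\<Sum>w\<in>bitstr n. (1/2) ^ (n + 2) * (2 + 2 * Re (Kt n m f g y w)))"
    unfolding drive_prob_def by (rule sum.cong[OF refl]) (rule termw)
  also have "\<dots> = (1/2) ^ (n + 2) * (2 * 2 ^ n + 2 * Re K)"
  proof -
    have "(\<Sum>w\<in>bitstr n. 2 + 2 * Re (Kt n m f g y w)) = 2 * 2 ^ n + 2 * Re K"
      by (simp add: sum.distrib card_bitstr K_def sum_distrib_left)
    then show ?thesis by (simp only: sum_distrib_left[symmetric])
  qed
  also have "\<dots> = (1 + Re K / 2 ^ n) / 2"
    by (simp add: field_simps power_add)
  finally show "drive_prob n (A23_state m n h f g) False
           = (1 + Re (zeta m powi (- int (wt y)) * crosscorr n m f g y / 2 ^ n)) / 2"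
    using R by simp
qed

end
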